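(* For every integer $n\geq 4$ and every edge $e$ of $G_n$, the graph $G_n - e$ is $(n-3)$-colourable.
   Context: Let $[n]=\{1,\dots,n\}$. A $2$-subset $\{a,b\}$ of $[n]$ with $a<b$ is called stable if $b \neq a+1$ and $\{a,b\}\neq\{1,n\}$; it is written $ab$. For $n\ge 4$, the graph $G_n$ has as vertex set all stable $2$-subsets of $[n]$; two vertices $ab$ ($a<b$) and $cd$ ($c<d$) with $a<c$ are adjacent iff $\{a,b\}\cap\{c,d\}=\emptyset$ and either $a<c<b<d$, or $1<a<c<d<b$. *)

theory Defs
  imports Main
begin

text \<open>A stable 2-subset {a,b} of [n] with a<b is encoded as the pair (a,b).\<close>
definition stable :: "nat \<Rightarrow> nat \<times> nat \<Rightarrow> bool" where
  "stable n v = (case v of (a, b) \<Rightarrow>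
      1 \<le> a \<and> a < b \<and> b \<le> n \<and> b \<noteq> a + 1 \<and> (a, b) \<noteq> (1, n))"

definition Gverts :: "nat \<Rightarrow> (nat \<times> nat) set" where
  "Gverts n = {v. stable n v}"

definition adj_ord :: "nat \<times> nat \<Rightarrow> nat \<times> nat \<Rightarrow> bool" where
  "adj_ord u v = (case u of (a, b) \<Rightarrow> case v of (c, d) \<Rightarrow>
      a < c \<and> {a, b} \<inter> {c, d} = {} \<and> ((a < c \<and> c < b \<and> b < d) \<or> (1 < a \<and> a < c \<and> c < d \<and> d < b)))"

definition Gadj :: "nat \<Rightarrow> nat \<times> nat \<Rightarrow> nat \<times> nat \<Rightarrow> bool" where
  "Gadj n u v = (u \<in> Gverts n \<and> v \<in> Gverts n \<and> (adj_ord u v \<or> adj_ord v u))"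

definition colourable_minus_edge ::
  "nat \<Rightarrow> nat \<times> nat \<Rightarrow> nat \<times> nat \<Rightarrow> nat \<Rightarrow> bool" where
  "colourable_minus_edge n u v k = (\<exists>f :: nat \<times> nat \<Rightarrow> nat.
      (\<forall>x\<in>Gverts n. f x < k) \<and>
      (\<forall>x y. Gadj n x y \<and> {x, y} \<noteq> {u, v} \<longrightarrow> f x \<noteq> f y))"

end

theory Submission
  imports Defs
begin

definition rk :: "nat \<Rightarrow> nat \<Rightarrow> nat \<Rightarrow> nat \<Rightarrow> nat" where
  "rk ta tb tc i = (if i < ta then i - 1 else if i < tb then i - 2 else if i < tc then i - 3 else i - 4)"

lemma generic:
  fixes g :: "nat \<times> nat \<Rightarrow> nat"
  assumes "n \<ge> 4" "1 \<le> ta" "ta < tb" "tb < tc" "tc \<le> n"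
    and rng: "\<And>x. x \<in> Gverts n \<Longrightarrow> 1 \<le> g x \<and> g x \<le> n \<and> g x \<noteq> ta \<and> g x \<noteq> tb \<and> g x \<noteq> tc"
    and hp: "\<And>x y. Gadj n x y \<Longrightarrow> {x, y} \<noteq> {u, v} \<Longrightarrow> g x \<noteq> g y"
  shows "colourable_minus_edge n u v (n - 3)"
  unfolding colourable_minus_edge_def
proof (intro exI[of _ "\<lambda>x. rk ta tb tc (g x)"] conjI ballI allI impI)
  fix x assume "x \<in> Gverts n"
  from rng[OF this] show "rk ta tb tc (g x) < n - 3" using assms(1-5) unfolding rk_def by auto
next
  fix x y assume h: "Gadj n x y \<and> {x, y} \<noteq> {u, v}"
  then have xv: "x \<in> Gverts n" and yv: "y \<in> Gverts n" unfolding Gadj_def by auto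
  have "g x \<noteq> g y" using h hp by blast
  with rng[OF xv] rng[OF yv] show "rk ta tb tc (g x) \<noteq> rk ta tb tc (g y)"
    using assms(1-5) unfolding rk_def by (auto split: if_splits)
qed


definition AA :: "nat \<times> nat \<Rightarrow> nat \<times> nat \<Rightarrow> bool" where
  "AA x y = (adj_ord x y \<or> adj_ord y x)"

lemma AA_simp: "AA (p,q) (r,s) = ((p < r \<and> {p, q} \<inter> {r, s} = {} \<and> (r < q \<and> q < s \<or> 1 < p \<and> r < s \<and> s < q))
   \<or> (r < p \<and> {r, s} \<inter> {p, q} = {} \<and> (p < s \<and> s < q \<or> 1 < r \<and> p < q \<and> q < s)))"
  unfolding AA_def adj_ord_def by auto

lemma AA_simp2: "AA (p,q) (r,s) = ((p < r \<and> p \<noteq> s \<and> q \<noteq> r \<and> q \<noteq> s \<and> (r < q \<and> q < s \<or> 1 < p \<and> r < s \<and> s < q))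
   \<or> (r < p \<and> r \<noteq> q \<and> s \<noteq> p \<and> s \<noteq> q \<and> (p < s \<and> s < q \<or> 1 < r \<and> p < q \<and> q < s)))"
  unfolding AA_simp by auto

lemma Gverts_simp: "(p,q) \<in> Gverts n = (1 \<le> p \<and> p + 2 \<le> q \<and> q \<le> n \<and> (p = 1 \<longrightarrow> q \<noteq> n))"
  unfolding Gverts_def stable_def by auto

lemma Gadj_simp: "Gadj n x y = (x \<in> Gverts n \<and> y \<in> Gverts n \<and> AA x y)"
  unfolding Gadj_def AA_def by auto


lemma AA_sym: "AA x y = AA y x"
  unfolding AA_def by auto

lemma AA_disj: "AA (p,q) (r,s) \<Longrightarrow> p \<noteq> r \<and> p \<noteq> s \<and> q \<noteq> r \<and> q \<noteq> s"
  unfolding AA_simp2 by auto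

lemma AA_irr: "\<not> AA x x"
  unfolding AA_def adj_ord_def by auto

definition cN :: "nat \<Rightarrow> nat \<Rightarrow> nat \<Rightarrow> nat \<Rightarrow> nat \<Rightarrow> nat \<Rightarrow> bool" where
  "cN a b c d p q = (p \<noteq> 1 \<and> p \<noteq> c \<and> p \<noteq> d \<and> \<not>(p = c+1 \<and> AA (p,q) (1,c)) \<and> \<not>(p = a \<and> AA (p,q) (1,d))
          \<and> \<not>(p = b \<and> AA (p,q) (c,d)))"

definition gN :: "nat \<Rightarrow> nat \<Rightarrow> nat \<Rightarrow> nat \<Rightarrow> nat \<times> nat \<Rightarrow> nat" where
  "gN a b c d w = (case w of (p,q) \<Rightarrow>
     if w = (1,c) then c+1 else if w = (1,d) then a else if w = (c,d) then b
     else if cN a b c d p q then p else q)"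

definition cX1 :: "nat \<Rightarrow> nat \<Rightarrow> nat \<Rightarrow> nat \<Rightarrow> nat \<Rightarrow> bool" where
  "cX1 b c d p q = (p \<noteq> 1 \<and> p \<noteq> b \<and> p \<noteq> c \<and> \<not>(p = d \<and> AA (p,q) (1,b)) \<and> \<not>(p = d \<and> AA (p,q) (1,c))
      \<and> \<not>(p = d \<and> AA (p,q) (c,b)))"

definition gX1 :: "nat \<Rightarrow> nat \<Rightarrow> nat \<Rightarrow> nat \<times> nat \<Rightarrow> nat" where
  "gX1 b c d w = (case w of (p,q) \<Rightarrow>
     if w = (1,b) then d else if w = (1,c) then d else if w = (c,b) then d
     else if cX1 b c d p q then p else q)"

definition cX2 :: "nat \<Rightarrow> nat \<Rightarrow> nat \<Rightarrow> nat \<Rightarrow> nat \<Rightarrow> nat \<Rightarrow> bool" where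
  "cX2 a b c d p q = (p \<noteq> a \<and> p \<noteq> b \<and> p \<noteq> c \<and> \<not>(p = d \<and> AA (p,q) (a,b)) \<and> \<not>(p = 1 \<and> AA (p,q) (a,c))
      \<and> \<not>(p = 1 \<and> AA (p,q) (c,b)))"

definition gX2 :: "nat \<Rightarrow> nat \<Rightarrow> nat \<Rightarrow> nat \<Rightarrow> nat \<times> nat \<Rightarrow> nat" where
  "gX2 a b c d w = (case w of (p,q) \<Rightarrow>
     if w = (a,b) then d else if w = (a,c) then 1 else if w = (c,b) then 1
     else if cX2 a b c d p q then p else q)"


lemma N_vals: assumes "1 < a" "a < c" "c + 2 \<le> d" "d < b" "b \<le> n" shows "gN a b c d (1,c) = c+1" "gN a b c d (1,d) = a" "gN a b c d (c,d) = b"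
  using assms unfolding gN_def by auto

lemma N_gen: assumes "(p,q) \<notin> {(1,c),(1,d),(c,d)}" shows "gN a b c d (p,q) = (if cN a b c d p q then p else q)"
  using assms unfolding gN_def by (simp only: prod.case insert_iff empty_iff de_Morgan_disj if_False simp_thms)

lemma N_rng:
  assumes "1 < a" "a < c" "c + 2 \<le> d" "d < b" "b \<le> n" "(p,q) \<in> Gverts n"
  shows "1 \<le> gN a b c d (p,q) \<and> gN a b c d (p,q) \<le> n \<and> gN a b c d (p,q) \<noteq> 1 \<and> gN a b c d (p,q) \<noteq> c \<and> gN a b c d (p,q) \<noteq> d"
proof (cases "(p,q) \<in> {(1,c),(1,d),(c,d)}")
  case True then show ?thesis using assms N_vals[OF assms(1-5)] unfolding Gverts_simp by auto
next
  case False
  show ?thesis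
  proof (cases "cN a b c d p q")
    case True then show ?thesis using assms N_gen[OF False] unfolding Gverts_simp cN_def by auto
  next
    case F2: False
    have "q \<noteq> 1 \<and> q \<noteq> c \<and> q \<noteq> d"
    proof (intro conjI notI)
      assume [simp]: "q = 1"
      show False using F2 False assms unfolding Gverts_simp cN_def AA_simp2 by auto
    next
      assume [simp]: "q = c"
      show False using F2 False assms unfolding Gverts_simp cN_def AA_simp2 by auto
    next
      assume [simp]: "q = d"
      show False using F2 False assms unfolding Gverts_simp cN_def AA_simp2 by auto
    qed
    then show ?thesis using assms N_gen[OF False] F2 unfolding Gverts_simp by auto
  qed
qed

lemma N_ext0:
  assumes "1 < a" "a < c" "c + 2 \<le> d" "d < b" "b \<le> n" "(r,s) \<in> Gverts n" "(1,c) \<in> Gverts n"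
    "(r,s) \<notin> {(1,c),(1,d),(c,d)}" "AA (r,s) (1,c)" "gN a b c d (r,s) = gN a b c d (1,c)"
  shows "(r,s) = (a,b) \<and> (1,c) = (c,d) \<or> (r,s) = (c,d) \<and> (1,c) = (a,b)"
proof (cases "cN a b c d r s")
  case True
  then have "r = c+1" using assms N_gen[OF assms(8)] N_vals[OF assms(1-5)] by auto
  then show ?thesis using True assms(9) unfolding cN_def by auto
next
  case False
  then have [simp]: "s = c+1" using assms N_gen[OF assms(8)] N_vals[OF assms(1-5)] by auto
  show ?thesis using False assms unfolding cN_def AA_simp2 Gverts_simp by auto
qed

lemma N_ext1:
  assumes "1 < a" "a < c" "c + 2 \<le> d" "d < b" "b \<le> n" "(r,s) \<in> Gverts n" "(1,d) \<in> Gverts n"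
    "(r,s) \<notin> {(1,c),(1,d),(c,d)}" "AA (r,s) (1,d)" "gN a b c d (r,s) = gN a b c d (1,d)"
  shows "(r,s) = (a,b) \<and> (1,d) = (c,d) \<or> (r,s) = (c,d) \<and> (1,d) = (a,b)"
proof (cases "cN a b c d r s")
  case True
  then have "r = a" using assms N_gen[OF assms(8)] N_vals[OF assms(1-5)] by auto
  then show ?thesis using True assms(9) unfolding cN_def by auto
next
  case False
  then have [simp]: "s = a" using assms N_gen[OF assms(8)] N_vals[OF assms(1-5)] by auto
  show ?thesis using False assms unfolding cN_def AA_simp2 Gverts_simp by auto
qed

lemma N_ext2:
  assumes "1 < a" "a < c" "c + 2 \<le> d" "d < b" "b \<le> n" "(r,s) \<in> Gverts n" "(c,d) \<in> Gverts n"
    "(r,s) \<notin> {(1,c),(1,d),(c,d)}" "AA (r,s) (c,d)" "gN a b c d (r,s) = gN a b c d (c,d)"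
  shows "(r,s) = (a,b) \<and> (c,d) = (c,d) \<or> (r,s) = (c,d) \<and> (c,d) = (a,b)"
proof (cases "cN a b c d r s")
  case True
  then have "r = b" using assms N_gen[OF assms(8)] N_vals[OF assms(1-5)] by auto
  then show ?thesis using True assms(9) unfolding cN_def by auto
next
  case False
  then have [simp]: "s = b" using assms N_gen[OF assms(8)] N_vals[OF assms(1-5)] by auto
  show ?thesis using False assms unfolding cN_def AA_simp2 Gverts_simp by auto
qed

lemma X1_vals: assumes "1 < c" "c < b" "b < d" "d \<le> n" shows "gX1 b c d (1,b) = d" "gX1 b c d (1,c) = d" "gX1 b c d (c,b) = d"
  using assms unfolding gX1_def by auto

lemma X1_gen: assumes "(p,q) \<notin> {(1,b),(1,c),(c,b)}" shows "gX1 b c d (p,q) = (if cX1 b c d p q then p else q)"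
  using assms unfolding gX1_def by (simp only: prod.case insert_iff empty_iff de_Morgan_disj if_False simp_thms)

lemma X1_rng:
  assumes "1 < c" "c < b" "b < d" "d \<le> n" "(p,q) \<in> Gverts n"
  shows "1 \<le> gX1 b c d (p,q) \<and> gX1 b c d (p,q) \<le> n \<and> gX1 b c d (p,q) \<noteq> 1 \<and> gX1 b c d (p,q) \<noteq> c \<and> gX1 b c d (p,q) \<noteq> b"
proof (cases "(p,q) \<in> {(1,b),(1,c),(c,b)}")
  case True then show ?thesis using assms X1_vals[OF assms(1-4)] unfolding Gverts_simp by auto
next
  case False
  show ?thesis
  proof (cases "cX1 b c d p q")
    case True then show ?thesis using assms X1_gen[OF False] unfolding Gverts_simp cX1_def by auto
  next
    case F2: False
    have "q \<noteq> 1 \<and> q \<noteq> c \<and> q \<noteq> b"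
    proof (intro conjI notI)
      assume [simp]: "q = 1"
      show False using F2 False assms unfolding Gverts_simp cX1_def AA_simp2 by auto
    next
      assume [simp]: "q = c"
      show False using F2 False assms unfolding Gverts_simp cX1_def AA_simp2 by auto
    next
      assume [simp]: "q = b"
      show False using F2 False assms unfolding Gverts_simp cX1_def AA_simp2 by auto
    qed
    then show ?thesis using assms X1_gen[OF False] F2 unfolding Gverts_simp by auto
  qed
qed

lemma X1_ext0:
  assumes "1 < c" "c < b" "b < d" "d \<le> n" "(r,s) \<in> Gverts n" "(1,b) \<in> Gverts n"
    "(r,s) \<notin> {(1,b),(1,c),(c,b)}" "AA (r,s) (1,b)" "gX1 b c d (r,s) = gX1 b c d (1,b)"
  shows "(r,s) = (1,b) \<and> (1,b) = (c,d) \<or> (r,s) = (c,d) \<and> (1,b) = (1,b)"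
proof (cases "cX1 b c d r s")
  case True
  then have "r = d" using assms X1_gen[OF assms(7)] X1_vals[OF assms(1-4)] by auto
  then show ?thesis using True assms(8) unfolding cX1_def by auto
next
  case False
  then have [simp]: "s = d" using assms X1_gen[OF assms(7)] X1_vals[OF assms(1-4)] by auto
  show ?thesis using False assms unfolding cX1_def AA_simp2 Gverts_simp by auto
qed

lemma X1_ext1:
  assumes "1 < c" "c < b" "b < d" "d \<le> n" "(r,s) \<in> Gverts n" "(1,c) \<in> Gverts n"
    "(r,s) \<notin> {(1,b),(1,c),(c,b)}" "AA (r,s) (1,c)" "gX1 b c d (r,s) = gX1 b c d (1,c)"
  shows "(r,s) = (1,b) \<and> (1,c) = (c,d) \<or> (r,s) = (c,d) \<and> (1,c) = (1,b)"
proof (cases "cX1 b c d r s")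
  case True
  then have "r = d" using assms X1_gen[OF assms(7)] X1_vals[OF assms(1-4)] by auto
  then show ?thesis using True assms(8) unfolding cX1_def by auto
next
  case False
  then have [simp]: "s = d" using assms X1_gen[OF assms(7)] X1_vals[OF assms(1-4)] by auto
  show ?thesis using False assms unfolding cX1_def AA_simp2 Gverts_simp by auto
qed

lemma X1_ext2:
  assumes "1 < c" "c < b" "b < d" "d \<le> n" "(r,s) \<in> Gverts n" "(c,b) \<in> Gverts n"
    "(r,s) \<notin> {(1,b),(1,c),(c,b)}" "AA (r,s) (c,b)" "gX1 b c d (r,s) = gX1 b c d (c,b)"
  shows "(r,s) = (1,b) \<and> (c,b) = (c,d) \<or> (r,s) = (c,d) \<and> (c,b) = (1,b)"
proof (cases "cX1 b c d r s")
  case True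
  then have "r = d" using assms X1_gen[OF assms(7)] X1_vals[OF assms(1-4)] by auto
  then show ?thesis using True assms(8) unfolding cX1_def by auto
next
  case False
  then have [simp]: "s = d" using assms X1_gen[OF assms(7)] X1_vals[OF assms(1-4)] by auto
  show ?thesis using False assms unfolding cX1_def AA_simp2 Gverts_simp by auto
qed

lemma X2_vals: assumes "1 < a" "a < c" "c < b" "b < d" "d \<le> n" shows "gX2 a b c d (a,b) = d" "gX2 a b c d (a,c) = 1" "gX2 a b c d (c,b) = 1"
  using assms unfolding gX2_def by auto

lemma X2_gen: assumes "(p,q) \<notin> {(a,b),(a,c),(c,b)}" shows "gX2 a b c d (p,q) = (if cX2 a b c d p q then p else q)"
  using assms unfolding gX2_def by (simp only: prod.case insert_iff empty_iff de_Morgan_disj if_False simp_thms)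

lemma X2_rng:
  assumes "1 < a" "a < c" "c < b" "b < d" "d \<le> n" "(p,q) \<in> Gverts n"
  shows "1 \<le> gX2 a b c d (p,q) \<and> gX2 a b c d (p,q) \<le> n \<and> gX2 a b c d (p,q) \<noteq> a \<and> gX2 a b c d (p,q) \<noteq> c \<and> gX2 a b c d (p,q) \<noteq> b"
proof (cases "(p,q) \<in> {(a,b),(a,c),(c,b)}")
  case True then show ?thesis using assms X2_vals[OF assms(1-5)] unfolding Gverts_simp by auto
next
  case False
  show ?thesis
  proof (cases "cX2 a b c d p q")
    case True then show ?thesis using assms X2_gen[OF False] unfolding Gverts_simp cX2_def by auto
  next
    case F2: False
    have "q \<noteq> a \<and> q \<noteq> c \<and> q \<noteq> b"
    proof (intro conjI notI)
      assume [simp]: "q = a"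
      show False using F2 False assms unfolding Gverts_simp cX2_def AA_simp2 by auto
    next
      assume [simp]: "q = c"
      show False using F2 False assms unfolding Gverts_simp cX2_def AA_simp2 by auto
    next
      assume [simp]: "q = b"
      show False using F2 False assms unfolding Gverts_simp cX2_def AA_simp2 by auto
    qed
    then show ?thesis using assms X2_gen[OF False] F2 unfolding Gverts_simp by auto
  qed
qed

lemma X2_ext0:
  assumes "1 < a" "a < c" "c < b" "b < d" "d \<le> n" "(r,s) \<in> Gverts n" "(a,b) \<in> Gverts n"
    "(r,s) \<notin> {(a,b),(a,c),(c,b)}" "AA (r,s) (a,b)" "gX2 a b c d (r,s) = gX2 a b c d (a,b)"
  shows "(r,s) = (a,b) \<and> (a,b) = (c,d) \<or> (r,s) = (c,d) \<and> (a,b) = (a,b)"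
proof (cases "cX2 a b c d r s")
  case True
  then have "r = d" using assms X2_gen[OF assms(8)] X2_vals[OF assms(1-5)] by auto
  then show ?thesis using True assms(9) unfolding cX2_def by auto
next
  case False
  then have [simp]: "s = d" using assms X2_gen[OF assms(8)] X2_vals[OF assms(1-5)] by auto
  show ?thesis using False assms unfolding cX2_def AA_simp2 Gverts_simp by auto
qed

lemma X2_ext1:
  assumes "1 < a" "a < c" "c < b" "b < d" "d \<le> n" "(r,s) \<in> Gverts n" "(a,c) \<in> Gverts n"
    "(r,s) \<notin> {(a,b),(a,c),(c,b)}" "AA (r,s) (a,c)" "gX2 a b c d (r,s) = gX2 a b c d (a,c)"
  shows "(r,s) = (a,b) \<and> (a,c) = (c,d) \<or> (r,s) = (c,d) \<and> (a,c) = (a,b)"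
proof (cases "cX2 a b c d r s")
  case True
  then have "r = 1" using assms X2_gen[OF assms(8)] X2_vals[OF assms(1-5)] by auto
  then show ?thesis using True assms(9) unfolding cX2_def by auto
next
  case False
  then have [simp]: "s = 1" using assms X2_gen[OF assms(8)] X2_vals[OF assms(1-5)] by auto
  show ?thesis using False assms unfolding cX2_def AA_simp2 Gverts_simp by auto
qed

lemma X2_ext2:
  assumes "1 < a" "a < c" "c < b" "b < d" "d \<le> n" "(r,s) \<in> Gverts n" "(c,b) \<in> Gverts n"
    "(r,s) \<notin> {(a,b),(a,c),(c,b)}" "AA (r,s) (c,b)" "gX2 a b c d (r,s) = gX2 a b c d (c,b)"
  shows "(r,s) = (a,b) \<and> (c,b) = (c,d) \<or> (r,s) = (c,d) \<and> (c,b) = (a,b)"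
proof (cases "cX2 a b c d r s")
  case True
  then have "r = 1" using assms X2_gen[OF assms(8)] X2_vals[OF assms(1-5)] by auto
  then show ?thesis using True assms(9) unfolding cX2_def by auto
next
  case False
  then have [simp]: "s = 1" using assms X2_gen[OF assms(8)] X2_vals[OF assms(1-5)] by auto
  show ?thesis using False assms unfolding cX2_def AA_simp2 Gverts_simp by auto
qed


lemma conf_generic:
  fixes g :: "nat \<times> nat \<Rightarrow> nat" and E :: "(nat \<times> nat) set"
  assumes ne: "\<And>p q. (p,q) \<notin> E \<Longrightarrow> g (p,q) = p \<or> g (p,q) = q"
    and ext: "\<And>r s z. (r,s) \<in> Gverts n \<Longrightarrow> z \<in> Gverts n \<Longrightarrow> (r,s) \<notin> E \<Longrightarrow> z \<in> E \<Longrightarrow> AA (r,s) z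
       \<Longrightarrow> g (r,s) = g z \<Longrightarrow> (r,s) = u \<and> z = v \<or> (r,s) = v \<and> z = u"
    and ee: "\<And>x y. x \<in> E \<Longrightarrow> y \<in> E \<Longrightarrow> x \<in> Gverts n \<Longrightarrow> y \<in> Gverts n \<Longrightarrow> AA x y \<Longrightarrow> g x = g y
       \<Longrightarrow> x = u \<and> y = v \<or> x = v \<and> y = u"
    and adj: "Gadj n x y" and nuv: "{x, y} \<noteq> {u, v}"
  shows "g x \<noteq> g y"
proof
  assume eq: "g x = g y"
  have xv: "x \<in> Gverts n" and yv: "y \<in> Gverts n" and axy: "AA x y" using adj unfolding Gadj_simp by auto
  obtain p q where x: "x = (p,q)" by force
  obtain r s where y: "y = (r,s)" by force
  show False
  proof (cases "x \<in> E")
    case xe: True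
    show False
    proof (cases "y \<in> E")
      case True
      from ee[OF xe True xv yv axy eq] nuv show False by auto
    next
      case False
      have "AA (r,s) x" using axy AA_sym unfolding y by metis
      from ext[OF yv[unfolded y] xv False[unfolded y] xe this] eq nuv show False unfolding y by auto
    qed
  next
    case xn: False
    show False
    proof (cases "y \<in> E")
      case True
      from ext[OF xv[unfolded x] yv xn[unfolded x] True] axy eq nuv show False unfolding x by auto
    next
      case False
      have "g x = p \<or> g x = q" using ne xn unfolding x by auto
      moreover have "g y = r \<or> g y = s" using ne False unfolding y by auto
      moreover have "p \<noteq> r \<and> p \<noteq> s \<and> q \<noteq> r \<and> q \<noteq> s" using AA_disj axy unfolding x y by blast
      ultimately show False using eq by auto
    qed
  qed
qed

lemma colour_sym: "colourable_minus_edge n u v k = colourable_minus_edge n v u k"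
  unfolding colourable_minus_edge_def by (simp add: insert_commute)

lemma main_ord:
  assumes n4: "n \<ge> 4" and uv: "u \<in> Gverts n" and vv: "v \<in> Gverts n" and ad: "adj_ord u v"
  shows "colourable_minus_edge n u v (n - 3)"
proof -
  obtain a b where u: "u = (a,b)" by force
  obtain c d where v: "v = (c,d)" by force
  have ab: "1 \<le> a" "a + 2 \<le> b" "b \<le> n" using uv unfolding u Gverts_simp by auto
  have cd: "1 \<le> c" "c + 2 \<le> d" "d \<le> n" using vv unfolding v Gverts_simp by auto
  have o: "a < c" "a \<noteq> d" "b \<noteq> c" "b \<noteq> d" "(c < b \<and> b < d) \<or> (1 < a \<and> c < d \<and> d < b)"
    using ad unfolding u v adj_ord_def by auto
  show ?thesis
  proof (cases "c < b \<and> b < d")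
    case cr: True
    show ?thesis
    proof (cases "a = 1")
      case a1: True
      have A: "1 < c" "c < b" "b < d" "d \<le> n" using cr o cd a1 by auto
      show ?thesis unfolding u v a1
      proof (rule generic[where g = "gX1 b c d" and ta = 1 and tb = c and tc = b])
        fix x assume "x \<in> Gverts n"
        then show "1 \<le> gX1 b c d x \<and> gX1 b c d x \<le> n \<and> gX1 b c d x \<noteq> 1 \<and> gX1 b c d x \<noteq> c \<and> gX1 b c d x \<noteq> b"
          using X1_rng[OF A] by (cases x) auto
      next
        fix x y assume "Gadj n x y" "{x, y} \<noteq> {(1, b), (c, d)}"
        then show "gX1 b c d x \<noteq> gX1 b c d y"
        proof (rule conf_generic[where E = "{(1,b),(1,c),(c,b)}", rotated 3])
          fix p q assume "(p,q) \<notin> {(1,b),(1,c),(c,b)}"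
          then show "gX1 b c d (p,q) = p \<or> gX1 b c d (p,q) = q" using X1_gen by auto
        next
          fix r s z assume h: "(r,s) \<in> Gverts n" "z \<in> Gverts n" "(r,s) \<notin> {(1,b),(1,c),(c,b)}"
            "z \<in> {(1,b),(1,c),(c,b)}" "AA (r,s) z" "gX1 b c d (r,s) = gX1 b c d z"
          from h(4) show "(r,s) = (1,b) \<and> z = (c,d) \<or> (r,s) = (c,d) \<and> z = (1,b)"
            using X1_ext0[OF A h(1) _ h(3)] X1_ext1[OF A h(1) _ h(3)] X1_ext2[OF A h(1) _ h(3)] h(2,5,6) by auto
        next
          fix x y assume h: "x \<in> {(1,b),(1,c),(c,b)}" "y \<in> {(1,b),(1,c),(c,b)}" "AA x y"
          then show "x = (1,b) \<and> y = (c,d) \<or> x = (c,d) \<and> y = (1,b)"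
            using AA_disj AA_irr by auto
        qed
      qed (use A n4 in auto)
    next
      case a2: False
      have A: "1 < a" "a < c" "c < b" "b < d" "d \<le> n" using cr o cd a2 ab by auto
      show ?thesis unfolding u v
      proof (rule generic[where g = "gX2 a b c d" and ta = a and tb = c and tc = b])
        fix x assume "x \<in> Gverts n"
        then show "1 \<le> gX2 a b c d x \<and> gX2 a b c d x \<le> n \<and> gX2 a b c d x \<noteq> a \<and> gX2 a b c d x \<noteq> c \<and> gX2 a b c d x \<noteq> b"
          using X2_rng[OF A] by (cases x) auto
      next
        fix x y assume "Gadj n x y" "{x, y} \<noteq> {(a, b), (c, d)}"
        then show "gX2 a b c d x \<noteq> gX2 a b c d y"
        proof (rule conf_generic[where E = "{(a,b),(a,c),(c,b)}", rotated 3])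
          fix p q assume "(p,q) \<notin> {(a,b),(a,c),(c,b)}"
          then show "gX2 a b c d (p,q) = p \<or> gX2 a b c d (p,q) = q" using X2_gen by auto
        next
          fix r s z assume h: "(r,s) \<in> Gverts n" "z \<in> Gverts n" "(r,s) \<notin> {(a,b),(a,c),(c,b)}"
            "z \<in> {(a,b),(a,c),(c,b)}" "AA (r,s) z" "gX2 a b c d (r,s) = gX2 a b c d z"
          from h(4) show "(r,s) = (a,b) \<and> z = (c,d) \<or> (r,s) = (c,d) \<and> z = (a,b)"
            using X2_ext0[OF A h(1) _ h(3)] X2_ext1[OF A h(1) _ h(3)] X2_ext2[OF A h(1) _ h(3)] h(2,5,6) by auto
        next
          fix x y assume h: "x \<in> {(a,b),(a,c),(c,b)}" "y \<in> {(a,b),(a,c),(c,b)}" "AA x y" "gX2 a b c d x = gX2 a b c d y"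
          then show "x = (a,b) \<and> y = (c,d) \<or> x = (c,d) \<and> y = (a,b)"
            using AA_disj AA_irr X2_vals[OF A] A by auto
        qed
      qed (use A n4 in auto)
    qed
  next
    case nc: False
    have A: "1 < a" "a < c" "c + 2 \<le> d" "d < b" "b \<le> n" using nc o cd ab by auto
    show ?thesis unfolding u v
    proof (rule generic[where g = "gN a b c d" and ta = 1 and tb = c and tc = d])
      fix x assume "x \<in> Gverts n"
      then show "1 \<le> gN a b c d x \<and> gN a b c d x \<le> n \<and> gN a b c d x \<noteq> 1 \<and> gN a b c d x \<noteq> c \<and> gN a b c d x \<noteq> d"
        using N_rng[OF A] by (cases x) auto
    next
      fix x y assume "Gadj n x y" "{x, y} \<noteq> {(a, b), (c, d)}"
      then show "gN a b c d x \<noteq> gN a b c d y"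
      proof (rule conf_generic[where E = "{(1,c),(1,d),(c,d)}", rotated 3])
        fix p q assume "(p,q) \<notin> {(1,c),(1,d),(c,d)}"
        then show "gN a b c d (p,q) = p \<or> gN a b c d (p,q) = q" using N_gen by auto
      next
        fix r s z assume h: "(r,s) \<in> Gverts n" "z \<in> Gverts n" "(r,s) \<notin> {(1,c),(1,d),(c,d)}"
          "z \<in> {(1,c),(1,d),(c,d)}" "AA (r,s) z" "gN a b c d (r,s) = gN a b c d z"
        from h(4) show "(r,s) = (a,b) \<and> z = (c,d) \<or> (r,s) = (c,d) \<and> z = (a,b)"
          using N_ext0[OF A h(1) _ h(3)] N_ext1[OF A h(1) _ h(3)] N_ext2[OF A h(1) _ h(3)] h(2,5,6) by auto
      next
        fix x y assume h: "x \<in> {(1,c),(1,d),(c,d)}" "y \<in> {(1,c),(1,d),(c,d)}" "AA x y" "gN a b c d x = gN a b c d y"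
        then show "x = (a,b) \<and> y = (c,d) \<or> x = (c,d) \<and> y = (a,b)"
          using AA_disj AA_irr N_vals[OF A] A by auto
      qed
    qed (use A n4 in auto)
  qed
qed

theorem lemma4:
  fixes n :: nat and u v :: "nat \<times> nat"
  assumes "n \<ge> 4" and "Gadj n u v"
  shows "colourable_minus_edge n u v (n - 3)"
proof -
  have uv: "u \<in> Gverts n" "v \<in> Gverts n" "adj_ord u v \<or> adj_ord v u" using assms(2) unfolding Gadj_def by auto
  show ?thesis
  proof (cases "adj_ord u v")
    case True then show ?thesis using main_ord assms(1) uv by blast
  next
    case False
    then have "colourable_minus_edge n v u (n - 3)" using main_ord assms(1) uv by blast
    then show ?thesis using colour_sym by blast
  qed
qed

end
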